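(* Let $h$ be a $k$-ary fixed function symbol of the term language, interpreted semantically as a differentiable function $h:\mathbb{R}^k\to\mathbb{R}$. Suppose that for each $i\in\{1,\dots,k\}$ there is a term $\partial_i h$ whose free variables are among $y_1,\dots,y_k$ such that for every state $\omega$, $$\omega[\![\partial_i h]\!] = \frac{\partial h}{\partial y_i}\big(\omega(y_1),\dots,\omega(y_k)\big).$$ Then for all differential-free terms $e_1,\dots,e_k$ the equation $$(h(e_1,\dots,e_k))' = \sum_{i=1}^k \partial_i h(e_1,\dots,e_k)\cdot (e_i)'$$ is valid (true in every state), where $\partial_i h(e_1,\dots,e_k)$ denotes the term obtained from $\partial_i h$ by substituting $e_j$ for $y_j$ ($j=1,\dots,k$).
   Context: Fix a set $V$ of real-valued variables such that each variable $x$ has an associated differential variable $x'\in V$. A state is a map $\omega:V\to\mathbb{R}$. Terms are generated by $e ::= x \mid c \mid e+e \mid e\cdot e \mid h(e_1,\dots,e_k)\mid (e)'$, where $x\in V$, $c$ is a rational constant, and $h$ ranges over finitely many fixed function symbols, each $k$-ary $h$ having a fixed interpretation as a $C^\infty$ function $\mathbb{R}^k\to\mathbb{R}$ (denoted by the same letter). A term is differential-free if it contains no subterm $(e)'$ and no differential variable. The value $\omega[\![e]\!]\in\mathbb{R}$ is defined as usual ($\omega[\![x]\!]=\omega(x)$, sums and products pointwise, $\omega[\![h(e_1,\dots,e_k)]\!]=h(\omega[\![e_1]\!],\dots,\omega[\![e_k]\!])$), and the differential has value $\omega[\![(e)']\!]=\sum_{x\in V}\omega(x')\,\frac{\partial \omega[\![e]\!]}{\partial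 x}$, where $\frac{\partial \omega[\![e]\!]}{\partial x}$ is the partial derivative of the value of $e$ with respect to the value of variable $x$, evaluated at $\omega$. An equation $e=\tilde e$ is valid if $\omega[\![e]\!]=\omega[\![\tilde e]\!]$ for all states $\omega$. *)

theory Defs
  imports "HOL-Analysis.Analysis"
begin

text \<open>Variables have type 'v; the differential variable x' of x is d x, where
  d :: 'v => 'v is a parameter.  Function symbols have type 'f, arity ar f, and
  interpretation I f :: real list => real (a function R^k -> R, with R^k represented
  by real lists of length k).\<close>

datatype ('v, 'f) trm =
    Var 'v
  | Const rat
  | Plus "('v, 'f) trm" "('v, 'f) trm"
  | Times "('v, 'f) trm" "('v, 'f) trm"
  | Fun 'f "('v, 'f) trm list"
  | Differential "('v, 'f) trm"

primrec wf_trm :: "('f \<Rightarrow> nat) \<Rightarrow> ('v, 'f) trm \<Rightarrow> bool" where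
  "wf_trm ar (Var x) = True"
| "wf_trm ar (Const c) = True"
| "wf_trm ar (Plus a b) = (wf_trm ar a \<and> wf_trm ar b)"
| "wf_trm ar (Times a b) = (wf_trm ar a \<and> wf_trm ar b)"
| "wf_trm ar (Fun f args) = (length args = ar f \<and> list_all (wf_trm ar) args)"
| "wf_trm ar (Differential e) = wf_trm ar e"

primrec fv :: "('v \<Rightarrow> 'v) \<Rightarrow> ('v, 'f) trm \<Rightarrow> 'v set" where
  "fv d (Var x) = {x}"
| "fv d (Const c) = {}"
| "fv d (Plus a b) = fv d a \<union> fv d b"
| "fv d (Times a b) = fv d a \<union> fv d b"
| "fv d (Fun f args) = \<Union> (set (map (fv d) args))"
| "fv d (Differential e) = fv d e \<union> d ` fv d e"

primrec diff_free :: "('v \<Rightarrow> 'v) \<Rightarrow> ('v, 'f) trm \<Rightarrow> bool" where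
  "diff_free d (Var x) = (x \<notin> range d)"
| "diff_free d (Const c) = True"
| "diff_free d (Plus a b) = (diff_free d a \<and> diff_free d b)"
| "diff_free d (Times a b) = (diff_free d a \<and> diff_free d b)"
| "diff_free d (Fun f args) = list_all (diff_free d) args"
| "diff_free d (Differential e) = False"

primrec subst :: "('v \<Rightarrow> ('v, 'f) trm) \<Rightarrow> ('v, 'f) trm \<Rightarrow> ('v, 'f) trm" where
  "subst \<sigma> (Var x) = \<sigma> x"
| "subst \<sigma> (Const c) = Const c"
| "subst \<sigma> (Plus a b) = Plus (subst \<sigma> a) (subst \<sigma> b)"
| "subst \<sigma> (Times a b) = Times (subst \<sigma> a) (subst \<sigma> b)"
| "subst \<sigma> (Fun f args) = Fun f (map (subst \<sigma>) args)"
| "subst \<sigma> (Differential e) = Differential (subst \<sigma> e)"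

definition inst :: "'v list \<Rightarrow> ('v, 'f) trm list \<Rightarrow> 'v \<Rightarrow> ('v, 'f) trm" where
  "inst ys es y = (case map_of (zip ys es) y of Some e \<Rightarrow> e | None \<Rightarrow> Var y)"

fun tsum :: "('v, 'f) trm list \<Rightarrow> ('v, 'f) trm" where
  "tsum [] = Const 0"
| "tsum [t] = t"
| "tsum (t # u # ts) = Plus t (tsum (u # ts))"

text \<open>Partial derivative of g : R^k -> R with respect to its i-th argument (0-based), at p.\<close>
definition partial_deriv :: "(real list \<Rightarrow> real) \<Rightarrow> nat \<Rightarrow> real list \<Rightarrow> real" where
  "partial_deriv g i p = deriv (\<lambda>t. g (p[i := t])) (p ! i)"

primrec sem :: "('f \<Rightarrow> real list \<Rightarrow> real) \<Rightarrow> ('v \<Rightarrow> 'v) \<Rightarrow> ('v \<Rightarrow> real) \<Rightarrow> ('v, 'f) trm \<Rightarrow> real" where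
  "sem I d \<omega> (Var x) = \<omega> x"
| "sem I d \<omega> (Const c) = of_rat c"
| "sem I d \<omega> (Plus a b) = sem I d \<omega> a + sem I d \<omega> b"
| "sem I d \<omega> (Times a b) = sem I d \<omega> a * sem I d \<omega> b"
| "sem I d \<omega> (Fun f args) = I f (map (sem I d \<omega>) args)"
| "sem I d \<omega> (Differential e) =
     infsum (\<lambda>x. \<omega> (d x) * deriv (\<lambda>t. sem I d (fun_upd \<omega> x t) e) (\<omega> x)) UNIV"

definition valid :: "('f \<Rightarrow> real list \<Rightarrow> real) \<Rightarrow> ('v \<Rightarrow> 'v) \<Rightarrow> ('v, 'f) trm \<Rightarrow> ('v, 'f) trm \<Rightarrow> bool" where
  "valid I d e e' \<longleftrightarrow> (\<forall>\<omega>. sem I d \<omega> e = sem I d \<omega> e')"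

definition lnorm :: "real list \<Rightarrow> real" where
  "lnorm v = sqrt (\<Sum>x\<leftarrow>v. x\<^sup>2)"

definition has_grad :: "(real list \<Rightarrow> real) \<Rightarrow> real list \<Rightarrow> real list \<Rightarrow> bool" where
  "has_grad g D p \<longleftrightarrow> length D = length p \<and>
     (\<forall>\<epsilon>>0. \<exists>\<delta>>0. \<forall>v. length v = length p \<and> lnorm (map2 (-) v p) < \<delta> \<longrightarrow>
        \<bar>g v - g p - (\<Sum>i<length p. D ! i * (v ! i - p ! i))\<bar> \<le> \<epsilon> * lnorm (map2 (-) v p))"

definition ldifferentiable :: "(real list \<Rightarrow> real) \<Rightarrow> real list \<Rightarrow> bool" where
  "ldifferentiable g p \<longleftrightarrow> (\<exists>D. has_grad g D p)"

definition smooth_fun :: "nat \<Rightarrow> (real list \<Rightarrow> real) \<Rightarrow> bool" where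
  "smooth_fun k g \<longleftrightarrow> (\<forall>is. set is \<subseteq> {..<k} \<longrightarrow>
     (\<forall>p. length p = k \<longrightarrow> ldifferentiable (foldr (\<lambda>i g. partial_deriv g i) is g) p))"

end

theory Submission
  imports Defs
begin

lemma lnorm_map_upt: "lnorm (map \<phi> [0..<k]) = L2_set \<phi> {..<k}"
  unfolding lnorm_def L2_set_def
  by (simp add: o_def atLeast0LessThan[symmetric] sum_set_upt_conv_sum_list_nat[symmetric])

lemma chain:
  fixes g :: "real list \<Rightarrow> real" and f :: "nat \<Rightarrow> real \<Rightarrow> real" and f' :: "nat \<Rightarrow> real"
  assumes G: "has_grad g D p" and len: "length p = k"
    and F: "\<And>i. i<k \<Longrightarrow> (f i has_real_derivative f' i) (at t0)"
    and P: "\<And>i. i<k \<Longrightarrow> f i t0 = p ! i"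
  shows "((\<lambda>t. g (map (\<lambda>i. f i t) [0..<k])) has_real_derivative (\<Sum>i<k. D!i * f' i)) (at t0)"
proof -
  define v where "v t = map (\<lambda>i. f i t) [0..<k]" for t
  have vp: "v t0 = p" unfolding v_def using len P by (intro nth_equalityI) auto
  have vlen: "length (v t) = k" for t by (simp add: v_def)
  have ln: "lnorm (map2 (-) (v t) p) = L2_set (\<lambda>i. f i t - f i t0) {..<k}" for t
  proof -
    have "map2 (-) (v t) p = map (\<lambda>i. f i t - f i t0) [0..<k]"
      using len P by (intro nth_equalityI) (auto simp: v_def)
    then show ?thesis by (simp add: lnorm_map_upt)
  qed
  define r where "r t = g (v t) - g p - (\<Sum>i<k. D!i * (f i t - f i t0))" for t
  have gv: "(\<lambda>t. g (v t)) = (\<lambda>t. g p + (\<Sum>i<k. D!i * (f i t - f i t0)) + r t)"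
    by (simp add: r_def)
  define M where "M = (\<Sum>i<k. (\<bar>f' i\<bar> + 1)) + 1"
  have M1: "M \<ge> 1" unfolding M_def by (simp add: sum_nonneg)
  have evq: "eventually (\<lambda>y. \<forall>i\<in>{..<k}. \<bar>(f i y - f i t0)/(y - t0)\<bar> \<le> \<bar>f' i\<bar> + 1) (at t0)"
  proof (rule eventually_ball_finite)
    show "finite {..<k}" by simp
    show "\<forall>i\<in>{..<k}. eventually (\<lambda>y. \<bar>(f i y - f i t0)/(y - t0)\<bar> \<le> \<bar>f' i\<bar> + 1) (at t0)"
    proof
      fix i assume "i \<in> {..<k}"
      then have "((\<lambda>y. (f i y - f i t0)/(y - t0)) \<longlongrightarrow> f' i) (at t0)"
        using F[of i] has_field_derivative_iff[of "f i" "f' i" t0 UNIV] by auto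
      then have "eventually (\<lambda>y. dist ((f i y - f i t0)/(y - t0)) (f' i) < 1) (at t0)"
        by (rule tendstoD) simp
      then show "eventually (\<lambda>y. \<bar>(f i y - f i t0)/(y - t0)\<bar> \<le> \<bar>f' i\<bar> + 1) (at t0)"
        by eventually_elim (unfold dist_real_def, linarith)
    qed
  qed
  have evL: "eventually (\<lambda>y. lnorm (map2 (-) (v y) p) \<le> M * \<bar>y - t0\<bar>) (at t0)"
    using evq
  proof eventually_elim
    case (elim y)
    have "lnorm (map2 (-) (v y) p) \<le> (\<Sum>i<k. \<bar>f i y - f i t0\<bar>)"
      unfolding ln by (rule L2_set_le_sum_abs)
    also have "\<dots> \<le> (\<Sum>i<k. (\<bar>f' i\<bar> + 1) * \<bar>y - t0\<bar>)"
    proof (rule sum_mono)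
      fix i assume i: "i \<in> {..<k}"
      show "\<bar>f i y - f i t0\<bar> \<le> (\<bar>f' i\<bar> + 1) * \<bar>y - t0\<bar>"
      proof (cases "y = t0")
        case True then show ?thesis by simp
      next
        case False
        have "\<bar>f i y - f i t0\<bar> = \<bar>(f i y - f i t0)/(y - t0)\<bar> * \<bar>y - t0\<bar>"
          using False by (simp add: abs_divide)
        also have "\<dots> \<le> (\<bar>f' i\<bar> + 1) * \<bar>y - t0\<bar>"
          using elim i by (intro mult_right_mono) auto
        finally show ?thesis .
      qed
    qed
    also have "\<dots> \<le> M * \<bar>y - t0\<bar>"
      unfolding M_def sum_distrib_right[symmetric] by (simp add: mult_right_mono)
    finally show ?case .
  qed
  have r0: "r t0 = 0" using vp by (simp add: r_def)
  have rD: "(r has_real_derivative 0) (at t0)"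
    unfolding has_field_derivative_iff r0
  proof (rule tendstoI)
    fix e :: real assume e: "e > 0"
    define \<epsilon> where "\<epsilon> = e / (2*M)"
    have \<epsilon>: "\<epsilon> > 0" using e M1 by (simp add: \<epsilon>_def)
    obtain \<delta> where \<delta>: "\<delta> > 0" and H: "\<forall>w. length w = length p \<and> lnorm (map2 (-) w p) < \<delta> \<longrightarrow>
        \<bar>g w - g p - (\<Sum>i<length p. D!i * (w!i - p!i))\<bar> \<le> \<epsilon> * lnorm (map2 (-) w p)"
      using G \<epsilon> unfolding has_grad_def by blast
    have evd: "eventually (\<lambda>y. dist y t0 < \<delta> / M) (at t0)"
      using \<delta> M1 by (intro tendstoD[OF tendsto_ident_at]) simp
    show "eventually (\<lambda>y. dist ((r y - 0)/(y - t0)) 0 < e) (at t0)"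
      using evL evd
    proof eventually_elim
      case (elim y)
      have "M * \<bar>y - t0\<bar> < M * (\<delta> / M)"
        using elim M1 by (intro mult_strict_left_mono) (auto simp: dist_real_def)
      then have lt: "lnorm (map2 (-) (v y) p) < \<delta>" using elim M1 by simp
      have sm: "(\<Sum>i<length p. D!i * (v y!i - p!i)) = (\<Sum>i<k. D!i * (f i y - f i t0))"
        using len P by (intro sum.cong) (auto simp: v_def)
      have "\<bar>r y\<bar> \<le> \<epsilon> * lnorm (map2 (-) (v y) p)"
        using H[rule_format, of "v y"] vlen len lt sm by (simp add: r_def)
      also have "\<dots> \<le> \<epsilon> * (M * \<bar>y - t0\<bar>)"
        using elim \<epsilon> by (intro mult_left_mono) auto
      finally have ry: "\<bar>r y\<bar> \<le> \<epsilon> * (M * \<bar>y - t0\<bar>)" .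
      show ?case
      proof (cases "y = t0")
        case True then show ?thesis using e by simp
      next
        case False
        have "\<bar>r y / (y - t0)\<bar> = \<bar>r y\<bar> / \<bar>y - t0\<bar>" by (simp add: abs_divide)
        also have "\<dots> \<le> \<epsilon> * M" using ry False by (simp add: divide_le_eq)
        also have "\<epsilon> * M = e / 2" using M1 by (simp add: \<epsilon>_def)
        finally have "\<bar>r y / (y - t0)\<bar> \<le> e / 2" .
        then have "\<bar>r y / (y - t0)\<bar> < e" using e by linarith
        then show ?thesis unfolding dist_real_def by simp
      qed
    qed
  qed
  have "((\<lambda>t. g p + (\<Sum>i<k. D!i * (f i t - f i t0)) + r t) has_real_derivative
          (0 + (\<Sum>i<k. D!i * (f' i - 0)) + 0)) (at t0)"
    by (intro derivative_intros DERIV_sum F rD) (auto intro!: derivative_eq_intros F)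
  then show ?thesis using gv unfolding v_def by simp
qed


lemma grad_partial:
  assumes G: "has_grad g D p" and i: "i < length p"
  shows "partial_deriv g i p = D ! i"
proof -
  define k where "k = length p"
  have "((\<lambda>t. g (map (\<lambda>j. (\<lambda>j t. if j = i then t else p!j) j t) [0..<k])) has_real_derivative
        (\<Sum>j<k. D!j * (if j = i then 1 else 0))) (at (p!i))"
    by (rule chain[OF G]) (auto simp: k_def)
  moreover have "(\<lambda>t. g (map (\<lambda>j. (\<lambda>j t. if j = i then t else p!j) j t) [0..<k])) = (\<lambda>t. g (p[i:=t]))"
    by (rule ext, rule arg_cong[where f=g], rule nth_equalityI) (auto simp: k_def nth_list_update)
  moreover have "(\<Sum>j<k. D!j * (if j = i then 1 else 0)) = D ! i"
  proof -
    have "(\<Sum>j<k. D!j * (if j = i then 1 else 0)) = (\<Sum>j<k. if j = i then D!j else 0)"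
      by (rule sum.cong) auto
    then show ?thesis using i by (simp add: k_def)
  qed
  ultimately show ?thesis unfolding partial_deriv_def by (metis DERIV_imp_deriv)
qed

lemma map_conv_upt: "map f xs = map (\<lambda>i. f (xs!i)) [0..<length xs]"
  by (rule nth_equalityI) auto

lemma sem_diff:
  assumes sm: "\<forall>f. smooth_fun (ar f) (I f)"
  shows "wf_trm ar e \<Longrightarrow> diff_free d e \<Longrightarrow>
    \<exists>D'. ((\<lambda>t. sem I d (fun_upd \<omega> x t) e) has_real_derivative D') (at t0)"
proof (induction e)
  case (Var y)
  show ?case
  proof (cases "y = x")
    case True then show ?thesis by (auto intro: DERIV_ident)
  next
    case False then show ?thesis by (auto intro: DERIV_const)
  qed
next
  case (Const c) then show ?case by (auto intro: DERIV_const)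
next
  case (Plus a b)
  have "wf_trm ar a" "diff_free d a" "wf_trm ar b" "diff_free d b" using Plus.prems by auto
  then obtain A B where "((\<lambda>t. sem I d (fun_upd \<omega> x t) a) has_real_derivative A) (at t0)"
     and "((\<lambda>t. sem I d (fun_upd \<omega> x t) b) has_real_derivative B) (at t0)" using Plus.IH by blast
  note ab = this
  show ?case unfolding sem.simps by (rule exI, rule DERIV_add[OF ab])
next
  case (Times a b)
  have "wf_trm ar a" "diff_free d a" "wf_trm ar b" "diff_free d b" using Times.prems by auto
  then obtain A B where "((\<lambda>t. sem I d (fun_upd \<omega> x t) a) has_real_derivative A) (at t0)"
     and "((\<lambda>t. sem I d (fun_upd \<omega> x t) b) has_real_derivative B) (at t0)" using Times.IH by blast
  note ab = this
  show ?case unfolding sem.simps by (rule exI, rule DERIV_mult[OF ab])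
next
  case (Fun g args)
  define k where "k = length args"
  define p where "p = map (sem I d (fun_upd \<omega> x t0)) args"
  have lp: "length p = ar g" using Fun.prems by (simp add: p_def)
  have "ldifferentiable (foldr (\<lambda>i g. partial_deriv g i) [] (I g)) p"
    using sm lp unfolding smooth_fun_def by (metis empty_subsetI empty_set)
  then obtain D where G: "has_grad (I g) D p" unfolding ldifferentiable_def by auto
  have "\<forall>i<k. \<exists>D'. ((\<lambda>t. sem I d (fun_upd \<omega> x t) (args!i)) has_real_derivative D') (at t0)"
  proof (intro allI impI)
    fix i assume i: "i < k"
    then have mem: "args ! i \<in> set args" by (simp add: k_def)
    then have "wf_trm ar (args!i)" "diff_free d (args!i)" using Fun.prems by (auto simp: list_all_iff)
    then show "\<exists>D'. ((\<lambda>t. sem I d (fun_upd \<omega> x t) (args!i)) has_real_derivative D') (at t0)"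
      using Fun.IH[OF mem] by blast
  qed
  then obtain F where F: "\<And>i. i<k \<Longrightarrow> ((\<lambda>t. sem I d (fun_upd \<omega> x t) (args!i)) has_real_derivative F i) (at t0)"
    by metis
  have "((\<lambda>t. I g (map (\<lambda>i. (\<lambda>i t. sem I d (fun_upd \<omega> x t) (args!i)) i t) [0..<k])) has_real_derivative
     (\<Sum>i<k. D!i * F i)) (at t0)"
    by (rule chain[OF G]) (auto simp: p_def k_def F)
  moreover have "(\<lambda>t. I g (map (\<lambda>i. (\<lambda>i t. sem I d (fun_upd \<omega> x t) (args!i)) i t) [0..<k])) =
     (\<lambda>t. sem I d (fun_upd \<omega> x t) (Fun g args))"
    by (auto simp: k_def map_conv_upt[of _ args])
  ultimately show ?case by (metis sem.simps(5))
next
  case (Differential e) then show ?case by simp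
qed

lemma coinc: "(\<forall>y\<in>fv d e. \<omega> y = \<omega>' y) \<Longrightarrow> sem I d \<omega> e = sem I d \<omega>' e"
proof (induction e arbitrary: \<omega> \<omega>')
  case (Fun g args)
  then have "map (sem I d \<omega>) args = map (sem I d \<omega>') args" by (auto simp: map_eq_conv)
  then show ?case by (metis sem.simps(5) subst.simps(5) map_map)
next
  case (Differential e)
  have "\<omega> (d x) * deriv (\<lambda>t. sem I d (fun_upd \<omega> x t) e) (\<omega> x) =
        \<omega>' (d x) * deriv (\<lambda>t. sem I d (fun_upd \<omega>' x t) e) (\<omega>' x)" for x
  proof (cases "x \<in> fv d e")
    case True
    have "(\<lambda>t. sem I d (fun_upd \<omega> x t) e) = (\<lambda>t. sem I d (fun_upd \<omega>' x t) e)"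
      using Differential by auto
    then show ?thesis using True Differential.prems by auto
  next
    case False
    have "(\<lambda>t. sem I d (fun_upd \<omega> x t) e) = (\<lambda>t. sem I d \<omega> e)"
      using Differential.IH False by auto
    moreover have "(\<lambda>t. sem I d (fun_upd \<omega>' x t) e) = (\<lambda>t. sem I d \<omega>' e)"
      using Differential.IH False by auto
    ultimately show ?thesis by simp
  qed
  then show ?case by simp
next
  case (Plus a b)
  then have "sem I d \<omega> a = sem I d \<omega>' a" "sem I d \<omega> b = sem I d \<omega>' b" by simp_all
  then show ?case by simp
next
  case (Times a b)
  then have "sem I d \<omega> a = sem I d \<omega>' a" "sem I d \<omega> b = sem I d \<omega>' b" by simp_all
  then show ?case by simp
qed auto

lemma deriv_notfv: "x \<notin> fv d e \<Longrightarrow> deriv (\<lambda>t. sem I d (fun_upd \<omega> x t) e) a = 0"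
proof -
  assume "x \<notin> fv d e"
  then have "(\<lambda>t. sem I d (fun_upd \<omega> x t) e) = (\<lambda>t. sem I d \<omega> e)" by (auto intro!: coinc)
  then show ?thesis by simp
qed

lemma finite_fv: "finite (fv d e)" by (induction e) auto

lemma fv_empty_subst: "fv d e = {} \<Longrightarrow> subst \<sigma> e = e"
  by (induction e) (auto intro: map_idI)

lemma subst_sem: "fv d e \<inter> range d = {} \<Longrightarrow> sem I d \<omega> (subst \<sigma> e) = sem I d (\<lambda>y. sem I d \<omega> (\<sigma> y)) e"
proof (induction e)
  case (Fun g args)
  then have "map (sem I d \<omega> \<circ> subst \<sigma>) args = map (sem I d (\<lambda>y. sem I d \<omega> (\<sigma> y))) args" by (auto simp: map_eq_conv)
  then show ?case by (metis sem.simps(5) subst.simps(5) map_map)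
next
  case (Differential e)
  then have "fv d (Differential e) = {}" by auto
  then show ?case
    by (metis coinc empty_iff fv_empty_subst subst.simps(6))
qed (auto simp: Int_Un_distrib2)

lemma sem_tsum: "sem I d \<omega> (tsum ts) = sum_list (map (sem I d \<omega>) ts)"
  by (induction ts rule: tsum.induct) auto


theorem lemma2p5:
  fixes I :: "'f::finite \<Rightarrow> real list \<Rightarrow> real" and ar :: "'f \<Rightarrow> nat"
    and d :: "'v \<Rightarrow> 'v" and h :: 'f and ys :: "'v list"
    and dh :: "('v, 'f) trm list" and es :: "('v, 'f) trm list"
  assumes smooth: "\<forall>f. smooth_fun (ar f) (I f)"
    and ys: "length ys = ar h" "distinct ys" "\<forall>y\<in>set ys. y \<notin> range d"
    and dh_wf: "length dh = ar h" "\<forall>i<ar h. wf_trm ar (dh ! i) \<and> fv d (dh ! i) \<subseteq> set ys"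
    and dh_sem: "\<forall>i<ar h. \<forall>\<omega>. sem I d \<omega> (dh ! i) = partial_deriv (I h) i (map \<omega> ys)"
    and es: "length es = ar h" "\<forall>e\<in>set es. wf_trm ar e \<and> diff_free d e"
  shows "valid I d (Differential (Fun h es))
           (tsum (map (\<lambda>i. Times (subst (inst ys es) (dh ! i)) (Differential (es ! i))) [0..<ar h]))"
  unfolding valid_def
proof
  fix \<omega> :: "'v \<Rightarrow> real"
  define k where "k = ar h"
  define p where "p = map (sem I d \<omega>) es"
  have lp: "length p = ar h" using es by (simp add: p_def)
  have "ldifferentiable (foldr (\<lambda>i g. partial_deriv g i) [] (I h)) p"
    using smooth lp unfolding smooth_fun_def by (metis empty_subsetI empty_set)
  then obtain D where G: "has_grad (I h) D p" unfolding ldifferentiable_def by auto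
  define c where "c i x = deriv (\<lambda>t. sem I d (fun_upd \<omega> x t) (es!i)) (\<omega> x)" for i x
  have esi: "wf_trm ar (es!i) \<and> diff_free d (es!i)" if "i < k" for i
    using es that by (auto simp: k_def)
  have dsum: "deriv (\<lambda>t. sem I d (fun_upd \<omega> x t) (Fun h es)) (\<omega> x) = (\<Sum>i<k. D!i * c i x)" for x
  proof -
    have F: "((\<lambda>t. sem I d (fun_upd \<omega> x t) (es!i)) has_real_derivative c i x) (at (\<omega> x))" if "i < k" for i
      using sem_diff[OF smooth, of "es!i" d \<omega> x "\<omega> x"] esi[OF that]
      unfolding c_def by (simp add: DERIV_deriv_iff_has_field_derivative del: fun_upd_apply)
    have "((\<lambda>t. I h (map (\<lambda>i. (\<lambda>i t. sem I d (fun_upd \<omega> x t) (es!i)) i t) [0..<k])) has_real_derivative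
       (\<Sum>i<k. D!i * c i x)) (at (\<omega> x))"
      by (rule chain[OF G]) (auto simp: p_def k_def es F)
    moreover have "(\<lambda>t. I h (map (\<lambda>i. (\<lambda>i t. sem I d (fun_upd \<omega> x t) (es!i)) i t) [0..<k])) =
       (\<lambda>t. sem I d (fun_upd \<omega> x t) (Fun h es))"
      by (auto simp: k_def es(1)[symmetric] map_conv_upt[of _ es])
    ultimately show ?thesis by (metis DERIV_imp_deriv)
  qed
  have Dp: "D!i = partial_deriv (I h) i p" if "i < k" for i
    using grad_partial[OF G] that lp by (simp add: k_def)
  define S where "S = (\<Union>i<k. fv d (es!i))"
  have finS: "finite S" by (simp add: S_def finite_fv)
  have c0: "c i x = 0" if "i < k" "x \<notin> S" for i x
    using that unfolding c_def S_def by (auto intro: deriv_notfv)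
  have inf_c: "infsum (\<lambda>x. \<omega> (d x) * c i x) UNIV = (\<Sum>x\<in>S. \<omega> (d x) * c i x)" if "i < k" for i
  proof -
    have "infsum (\<lambda>x. \<omega> (d x) * c i x) UNIV = infsum (\<lambda>x. \<omega> (d x) * c i x) S"
      by (rule infsum_cong_neutral) (auto simp: c0 that)
    then show ?thesis using finS by simp
  qed
  have "sem I d \<omega> (Differential (Fun h es)) = infsum (\<lambda>x. \<omega> (d x) * (\<Sum>i<k. D!i * c i x)) UNIV"
    by (simp only: sem.simps(6) dsum)
  also have "\<dots> = (\<Sum>x\<in>S. \<omega> (d x) * (\<Sum>i<k. D!i * c i x))"
  proof -
    have "infsum (\<lambda>x. \<omega> (d x) * (\<Sum>i<k. D!i * c i x)) UNIV = infsum (\<lambda>x. \<omega> (d x) * (\<Sum>i<k. D!i * c i x)) S"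
      by (rule infsum_cong_neutral) (auto simp: c0)
    then show ?thesis using finS by simp
  qed
  also have "\<dots> = (\<Sum>i<k. D!i * (\<Sum>x\<in>S. \<omega> (d x) * c i x))"
    by (simp add: sum_distrib_left mult.left_commute sum.swap[of _ S])
  also have "\<dots> = (\<Sum>i<k. partial_deriv (I h) i p * infsum (\<lambda>x. \<omega> (d x) * c i x) UNIV)"
    by (rule sum.cong) (auto simp: Dp inf_c)
  also have "\<dots> = sem I d \<omega> (tsum (map (\<lambda>i. Times (subst (inst ys es) (dh ! i)) (Differential (es ! i))) [0..<ar h]))"
  proof -
    have sub: "sem I d \<omega> (subst (inst ys es) (dh ! i)) = partial_deriv (I h) i p" if "i < k" for i
    proof -
      have "fv d (dh ! i) \<inter> range d = {}" using dh_wf ys that by (auto simp: k_def)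
      then have "sem I d \<omega> (subst (inst ys es) (dh ! i)) = sem I d (\<lambda>y. sem I d \<omega> (inst ys es y)) (dh ! i)"
        by (rule subst_sem)
      also have "\<dots> = partial_deriv (I h) i (map (\<lambda>y. sem I d \<omega> (inst ys es y)) ys)"
        using dh_sem that by (simp add: k_def)
      also have "map (\<lambda>y. sem I d \<omega> (inst ys es y)) ys = p"
        using ys es by (intro nth_equalityI) (auto simp: p_def inst_def map_of_zip_nth)
      finally show ?thesis .
    qed
    have "sem I d \<omega> (tsum (map (\<lambda>i. Times (subst (inst ys es) (dh ! i)) (Differential (es ! i))) [0..<ar h]))
       = (\<Sum>i<k. sem I d \<omega> (subst (inst ys es) (dh ! i)) * sem I d \<omega> (Differential (es ! i)))"
      by (simp add: sem_tsum k_def o_def atLeast0LessThan[symmetric] sum_set_upt_conv_sum_list_nat[symmetric])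
    also have "\<dots> = (\<Sum>i<k. partial_deriv (I h) i p * infsum (\<lambda>x. \<omega> (d x) * c i x) UNIV)"
      by (rule sum.cong) (auto simp: sub c_def)
    finally show ?thesis by simp
  qed
  finally show "sem I d \<omega> (Differential (Fun h es)) = sem I d \<omega> (tsum (map (\<lambda>i. Times (subst (inst ys es) (dh ! i)) (Differential (es ! i))) [0..<ar h]))" .
qed

end
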